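(* For $\alpha\ge0$ let $f(r^2)=1+\frac{r^2}{1+r^2}$, $q(u,v)=1+\alpha(\tfrac13u^2+\tfrac23v^2)$, $$a(u,v)=\frac{q(u,v)^2}{f(u^2+v^2)^2},\quad b(u,v)=\frac{q(u,v)^{5/2}}{f(u^2+v^2)^3},\quad \mathcal B(s,u,v)=1+u^2+v^2-a(u,v)s^2+b(u,v)s^3 .$$ Then for every $(u,v)\in\mathbb{R}^2$, as a function of $s$, $\mathcal B$ has a nondegenerate local maximum at $s=0$ with value $h(u,v)=1+u^2+v^2$, a local minimum at $s_m=\tfrac{2a}{3b}$ with value $\mathcal B(s_m,u,v)=1+u^2+v^2-\tfrac{4}{27}q(u,v)$, and returns to the value $h$ first at $s_b=a/b$ (with positive $s$-derivative there); the separatrix action is $$\jmath(u,v)=\int_0^{a/b}\sqrt{2(h(u,v)-\mathcal B(s,u,v))}\,ds=\frac{4\sqrt2\,a^{5/2}}{15\,b^2}=\frac{4\sqrt2}{15}f(u^2+v^2),$$ which depends only on $h$. Hence any divergence-free field realising $\mathcal B$ as its field strength in fieldline coordinates $(s,u,v)$ is weakly isodrastic, while for $\alpha\neq0$ the minimum value $\mathcal B(s_m,u,v)$ of the field strength along fieldlines is not constant on the level sets $\{h=\mathrm{const}\}$, so such a field is not omnigenous.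
   Context: Fieldline coordinates: $(u,v)$ label fieldlines and $s$ is signed arclength along them from the transverse surface $s=0$, which plays the role of $\Sigma^-$ (the set of nondegenerate local maxima of field strength along fieldlines). A field realising $\mathcal B$ is weakly isodrastic if the separatrix action $\jmath$ is constant on level sets of $h=|B|$ on $\Sigma^-$; omnigenity (for fields with flux function, here $h$) requires in particular that the minimum of $|B|$ along fieldlines be the same for all fieldlines of a flux surface. *)

theory Defs
  imports "HOL-Analysis.Analysis"
begin

definition fstr :: "real \<Rightarrow> real" where
  "fstr r2 = 1 + r2 / (1 + r2)"

definition qf :: "real \<Rightarrow> real \<Rightarrow> real \<Rightarrow> real" where
  "qf \<alpha> u v = 1 + \<alpha> * (u\<^sup>2 / 3 + 2 * v\<^sup>2 / 3)"

definition acoef :: "real \<Rightarrow> real \<Rightarrow> real \<Rightarrow> real" where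
  "acoef \<alpha> u v = (qf \<alpha> u v)\<^sup>2 / (fstr (u\<^sup>2 + v\<^sup>2))\<^sup>2"

definition bcoef :: "real \<Rightarrow> real \<Rightarrow> real \<Rightarrow> real" where
  "bcoef \<alpha> u v = (qf \<alpha> u v) powr (5/2) / (fstr (u\<^sup>2 + v\<^sup>2)) ^ 3"

definition BB :: "real \<Rightarrow> real \<Rightarrow> real \<Rightarrow> real \<Rightarrow> real" where
  "BB \<alpha> s u v = 1 + u\<^sup>2 + v\<^sup>2 - acoef \<alpha> u v * s\<^sup>2 + bcoef \<alpha> u v * s ^ 3"

definition hh :: "real \<Rightarrow> real \<Rightarrow> real" where
  "hh u v = 1 + u\<^sup>2 + v\<^sup>2"

definition jact :: "real \<Rightarrow> real \<Rightarrow> real \<Rightarrow> real" where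
  "jact \<alpha> u v = integral {0 .. acoef \<alpha> u v / bcoef \<alpha> u v}
      (\<lambda>s. sqrt (2 * (hh u v - BB \<alpha> s u v)))"

text \<open>Weak isodrasticity: the separatrix action is constant on level sets of h on Sigma^-
  (here Sigma^- is the surface s = 0, parametrised by all (u,v)).\<close>
definition weakly_isodrastic :: "(real \<Rightarrow> real \<Rightarrow> real) \<Rightarrow> (real \<Rightarrow> real \<Rightarrow> real) \<Rightarrow> bool" where
  "weakly_isodrastic j h \<longleftrightarrow> (\<forall>u v u' v'. h u v = h u' v' \<longrightarrow> j u v = j u' v')"

end

theory Submission imports Defs begin

lemma dB: fixes a b h :: real
  shows "deriv (\<lambda>s. h - a * s ^ 2 + b * s ^ 3) = (\<lambda>s. - 2 * a * s + 3 * b * s ^ 2)"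
proof
  fix x show "deriv (\<lambda>s. h - a * s ^ 2 + b * s ^ 3) x = - 2 * a * x + 3 * b * x ^ 2"
    by (rule DERIV_imp_deriv) (auto intro!: derivative_eq_intros simp: power2_eq_square)
qed

lemma ddB: fixes a b :: real
  shows "deriv (\<lambda>s. - 2 * a * s + 3 * b * s ^ 2) 0 = - 2 * a"
  by (rule DERIV_imp_deriv) (auto intro!: derivative_eq_intros)

lemma Fderiv:
  fixes a b s :: real assumes "b > 0" "0 < s" "s < a/b"
  shows "((\<lambda>s. sqrt 2 / b ^ 2  *  (2/5  *  (a - b * s) ^ 2 - 2 * a/3  *  (a - b * s))  *  sqrt (a - b * s))
          has_real_derivative sqrt (2  *  (a * s ^ 2 - b * s ^ 3))) (at s)"
proof -
  have w: "a - b * s > 0" using assms by (simp add: field_simps)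
  have eq: "sqrt (2  *  (a * s ^ 2 - b * s ^ 3)) = s  *  sqrt 2  *  sqrt (a - b * s)"
  proof -
    have "2  *  (a * s ^ 2 - b * s ^ 3) = s ^ 2  *  (2  *  (a - b * s))" by (simp add: algebra_simps power2_eq_square power3_eq_cube)
    moreover have "sqrt (s ^ 2 * (2 * (a - b * s))) = s * sqrt 2 * sqrt (a - b * s)"
      unfolding real_sqrt_mult real_sqrt_abs using assms by simp
    ultimately show ?thesis by simp
  qed
  define r where "r = sqrt (a - b * s)"
  have r: "r > 0" "r ^ 2 = a - b * s" using w by (auto simp: r_def)
  have ra: "a = b * s + r * r" using r(2) by (simp add: power2_eq_square)
  have d: "((\<lambda>s. sqrt 2 / b ^ 2 * (2/5 * (a - b * s) ^ 2 - 2 * a/3 * (a - b * s)) * sqrt (a - b * s))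
     has_real_derivative s * sqrt 2 * sqrt (a - b * s)) (at s)"
    using w assms(1) apply (auto intro!: derivative_eq_intros)
    apply (simp only: r_def[symmetric] r(2)[symmetric])
    using r assms apply (simp add: field_simps power2_eq_square r(2)[symmetric])
    apply (subst ra)
    apply (simp add: algebra_simps power_numeral_reduce)
    done
  show ?thesis unfolding eq using d by simp
qed

lemma powr52: "(a::real) > 0 \<Longrightarrow> a powr (5/2) = a ^ 2 * sqrt a"
proof -
  assume a: "a > 0"
  have "a powr (5/2) = a powr (2 + 1/2)" by simp
  also have "\<dots> = a powr 2 * a powr (1/2)" by (rule powr_add)
  also have "\<dots> = a ^ 2 * sqrt a" using a by (simp add: powr_half_sqrt)
  finally show ?thesis .
qed

lemma cubic:
  fixes a b h :: real assumes a: "a > 0" and b: "b > 0"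
  defines "B \<equiv> \<lambda>s. h - a * s ^ 2 + b * s ^ 3"
  shows "deriv B 0 = 0" "deriv (deriv B) 0 < 0" "\<forall>\<^sub>F s in at 0. B s < B 0"
    "\<forall>\<^sub>F s in nhds (2 * a / (3 * b)). B (2 * a / (3 * b)) \<le> B s"
    "B (a / b) = h" "\<forall>s. 0 < s \<and> s < a / b \<longrightarrow> B s < h" "deriv B (a / b) > 0"
    "((\<lambda>s. sqrt (2 * (h - B s))) has_integral (4 * sqrt 2 * a powr (5/2) / (15 * b\<^sup>2))) {0 .. a / b}"
proof -
  have dB': "deriv B = (\<lambda>s. - 2 * a * s + 3 * b * s ^ 2)" unfolding B_def by (rule dB)
  show "deriv B 0 = 0" by (simp add: dB')
  show "deriv (deriv B) 0 < 0" unfolding dB' ddB using a by simp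
  show "deriv B (a / b) > 0" unfolding dB' using a b by (simp add: field_simps power2_eq_square)
  show "B (a / b) = h" unfolding B_def using b by (simp add: field_simps power2_eq_square power3_eq_cube)
  have pos: "B s < h" if "0 < s" "s < a / b" for s
  proof -
    have "b * s < a" using that b by (simp add: field_simps)
    then have "0 < s ^ 2 * (a - b * s)" using that by simp
    then show ?thesis unfolding B_def by (simp add: algebra_simps power2_eq_square power3_eq_cube)
  qed
  then show "\<forall>s. 0 < s \<and> s < a / b \<longrightarrow> B s < h" by blast
  show "\<forall>\<^sub>F s in at 0. B s < B 0"
    unfolding eventually_at
  proof (intro exI[of _ "a / b"] conjI ballI impI)
    show "a / b > 0" using a b by simp
    fix x :: real assume x: "x \<noteq> 0 \<and> dist x 0 < a / b"
    then have "b * \<bar>x\<bar> < a" using b by (simp add: field_simps dist_real_def)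
    moreover have "b * x \<le> b * \<bar>x\<bar>" using b by (simp add: mult_left_mono)
    ultimately have "b * x < a" by linarith
    have "x ^ 2 > 0" using x by simp
    then have "0 < x ^ 2 * (a - b * x)" using \<open>b * x < a\<close> by simp
    then show "B x < B 0" unfolding B_def by (simp add: algebra_simps power2_eq_square power3_eq_cube)
  qed
  define sm where "sm = 2 * a / (3 * b)"
  have sm: "sm > 0" "a = 3 * b * sm / 2" using a b by (auto simp: sm_def)
  show "\<forall>\<^sub>F s in nhds (2 * a / (3 * b)). B (2 * a / (3 * b)) \<le> B s"
    unfolding sm_def[symmetric] eventually_nhds_metric
  proof (intro exI[of _ sm] conjI allI impI)
    show "sm > 0" by fact
    fix x :: real assume "dist x sm < sm"
    then have "x > 0" by (simp add: dist_real_def abs_less_iff)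
    have "B x - B sm = b * (x - sm) ^ 2 * (x + sm / 2)"
      unfolding B_def sm(2) by (simp add: algebra_simps power2_eq_square power3_eq_cube)
    moreover have "b * (x - sm) ^ 2 * (x + sm / 2) \<ge> 0" using b \<open>x > 0\<close> sm by simp
    ultimately show "B sm \<le> B x" by simp
  qed
  define F where "F = (\<lambda>s. sqrt 2 / b ^ 2 * (2/5 * (a - b * s) ^ 2 - 2 * a/3 * (a - b * s)) * sqrt (a - b * s))"
  have "((\<lambda>s. sqrt (2 * (h - B s))) has_integral (F (a / b) - F 0)) {0 .. a / b}"
  proof (rule fundamental_theorem_of_calculus_interior)
    show "0 \<le> a / b" using a b by simp
    show "continuous_on {0..a / b} F" unfolding F_def by (intro continuous_intros)
    fix x assume x: "x \<in> {0<..<a / b}"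
    have "h - B x = a * x ^ 2 - b * x ^ 3" unfolding B_def by simp
    then show "(F has_vector_derivative sqrt (2 * (h - B x))) (at x)"
      unfolding has_real_derivative_iff_has_vector_derivative[symmetric] F_def
      using Fderiv[of b x a] x b by simp
  qed
  moreover have "F (a / b) - F 0 = 4 * sqrt 2 * a powr (5/2) / (15 * b\<^sup>2)"
    unfolding F_def powr52[OF a] using b by (simp add: field_simps power2_eq_square)
  ultimately show "((\<lambda>s. sqrt (2 * (h - B s))) has_integral (4 * sqrt 2 * a powr (5/2) / (15 * b\<^sup>2))) {0 .. a / b}"
    by simp
qed

lemma per_uv:
  fixes \<alpha> u v :: real assumes "\<alpha> \<ge> 0"
  shows "let a = acoef \<alpha> u v; b = bcoef \<alpha> u v; B = (\<lambda>s. BB \<alpha> s u v);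
            sm = 2 * a / (3 * b); sb = a / b
        in
          B 0 = hh u v
        \<and> deriv B 0 = 0 \<and> deriv (deriv B) 0 < 0
        \<and> (\<forall>\<^sub>F s in at 0. B s < B 0)
        \<and> 0 < sm
        \<and> (\<forall>\<^sub>F s in nhds sm. B sm \<le> B s)
        \<and> B sm = 1 + u\<^sup>2 + v\<^sup>2 - 4 / 27 * qf \<alpha> u v
        \<and> 0 < sb
        \<and> B sb = hh u v
        \<and> (\<forall>s. 0 < s \<and> s < sb \<longrightarrow> B s < hh u v)
        \<and> deriv B sb > 0
        \<and> ((\<lambda>s. sqrt (2 * (hh u v - B s))) has_integral
              (4 * sqrt 2 * a powr (5/2) / (15 * b\<^sup>2))) {0 .. sb}
        \<and> jact \<alpha> u v = 4 * sqrt 2 * a powr (5/2) / (15 * b\<^sup>2)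
        \<and> jact \<alpha> u v = 4 * sqrt 2 / 15 * fstr (u\<^sup>2 + v\<^sup>2)"
proof -
  define q where "q = qf \<alpha> u v"
  define f where "f = fstr (u\<^sup>2 + v\<^sup>2)"
  define a where "a = acoef \<alpha> u v"
  define b where "b = bcoef \<alpha> u v"
  define h where "h = hh u v"
  have q: "q \<ge> 1" unfolding q_def qf_def using assms by simp
  have f: "f \<ge> 1" unfolding f_def fstr_def by (simp add: add_nonneg_nonneg)
  have aq: "a = q ^ 2 / f ^ 2" unfolding a_def acoef_def q_def f_def by simp
  have bq: "b = q ^ 2 * sqrt q / f ^ 3" unfolding b_def bcoef_def q_def[symmetric] f_def[symmetric]
    using powr52[of q] q by simp
  have a: "a > 0" using aq q f by simp
  have b: "b > 0" using bq q f by simp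
  have sa: "sqrt a = q / f" using q f by (simp add: aq real_sqrt_divide)
  have BBeq: "(\<lambda>s. BB \<alpha> s u v) = (\<lambda>s. h - a * s ^ 2 + b * s ^ 3)"
    by (rule ext) (simp add: BB_def h_def hh_def a_def b_def)
  note c = cubic[OF a b, of h]
  have int: "((\<lambda>s. sqrt (2 * (h - (h - a * s ^ 2 + b * s ^ 3)))) has_integral (4 * sqrt 2 * a powr (5/2) / (15 * b\<^sup>2))) {0 .. a / b}"
    using c(8) by simp
  have j1: "jact \<alpha> u v = 4 * sqrt 2 * a powr (5/2) / (15 * b\<^sup>2)"
    unfolding jact_def a_def[symmetric] b_def[symmetric] h_def[symmetric]
    using int by (simp add: BB_def h_def hh_def a_def b_def integral_unique)
  have sq: "sqrt q ^ 2 = q" using q by simp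
  have r: "a powr (5/2) / b\<^sup>2 = f"
    unfolding powr52[OF a] sa using q f
    by (simp add: aq bq field_simps power2_eq_square sq[unfolded power2_eq_square] eval_nat_numeral)
  have j2: "jact \<alpha> u v = 4 * sqrt 2 / 15 * fstr (u\<^sup>2 + v\<^sup>2)"
    unfolding j1 f_def[symmetric] r[symmetric] by simp
  have a3: "a ^ 3 / b ^ 2 = q" using q f
    by (simp add: aq bq field_simps power2_eq_square sq[unfolded power2_eq_square] eval_nat_numeral)
  have Bsm: "h - a * (2 * a / (3 * b)) ^ 2 + b * (2 * a / (3 * b)) ^ 3 = h - 4 / 27 * (a ^ 3 / b ^ 2)"
    using b by (simp add: field_simps power2_eq_square power3_eq_cube)
  show ?thesis
    unfolding Let_def a_def[symmetric] b_def[symmetric] BBeq h_def[symmetric] q_def[symmetric]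
    using c j1 j2 a b int Bsm a3
    by (simp add: h_def hh_def)
qed

theorem mainTheorem8:
  fixes \<alpha> :: real
  assumes "\<alpha> \<ge> 0"
  shows
    "(\<forall>u v.
        let a = acoef \<alpha> u v; b = bcoef \<alpha> u v; B = (\<lambda>s. BB \<alpha> s u v);
            sm = 2 * a / (3 * b); sb = a / b
        in
        \<comment> \<open>nondegenerate local maximum at s = 0 with value h\<close>
          B 0 = hh u v
        \<and> deriv B 0 = 0 \<and> deriv (deriv B) 0 < 0
        \<and> (\<forall>\<^sub>F s in at 0. B s < B 0)
        \<comment> \<open>local minimum at s_m with the stated value\<close>
        \<and> 0 < sm
        \<and> (\<forall>\<^sub>F s in nhds sm. B sm \<le> B s)
        \<and> B sm = 1 + u\<^sup>2 + v\<^sup>2 - 4 / 27 * qf \<alpha> u v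
        \<comment> \<open>first return to the value h at s_b = a/b, with positive derivative\<close>
        \<and> 0 < sb
        \<and> B sb = hh u v
        \<and> (\<forall>s. 0 < s \<and> s < sb \<longrightarrow> B s < hh u v)
        \<and> deriv B sb > 0
        \<comment> \<open>separatrix action\<close>
        \<and> ((\<lambda>s. sqrt (2 * (hh u v - B s))) has_integral
              (4 * sqrt 2 * a powr (5/2) / (15 * b\<^sup>2))) {0 .. sb}
        \<and> jact \<alpha> u v = 4 * sqrt 2 * a powr (5/2) / (15 * b\<^sup>2)
        \<and> jact \<alpha> u v = 4 * sqrt 2 / 15 * fstr (u\<^sup>2 + v\<^sup>2))
   \<and> weakly_isodrastic (jact \<alpha>) hh
   \<and> (\<alpha> \<noteq> 0 \<longrightarrow>
        (\<exists>u v u' v'. hh u v = hh u' v' \<and>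
           BB \<alpha> (2 * acoef \<alpha> u v / (3 * bcoef \<alpha> u v)) u v
             \<noteq> BB \<alpha> (2 * acoef \<alpha> u' v' / (3 * bcoef \<alpha> u' v')) u' v'))"
proof (intro conjI allI impI)
  fix u v show "let a = acoef \<alpha> u v; b = bcoef \<alpha> u v; B = (\<lambda>s. BB \<alpha> s u v);
            sm = 2 * a / (3 * b); sb = a / b
        in
          B 0 = hh u v
        \<and> deriv B 0 = 0 \<and> deriv (deriv B) 0 < 0
        \<and> (\<forall>\<^sub>F s in at 0. B s < B 0)
        \<and> 0 < sm
        \<and> (\<forall>\<^sub>F s in nhds sm. B sm \<le> B s)
        \<and> B sm = 1 + u\<^sup>2 + v\<^sup>2 - 4 / 27 * qf \<alpha> u v
        \<and> 0 < sb
        \<and> B sb = hh u v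
        \<and> (\<forall>s. 0 < s \<and> s < sb \<longrightarrow> B s < hh u v)
        \<and> deriv B sb > 0
        \<and> ((\<lambda>s. sqrt (2 * (hh u v - B s))) has_integral
              (4 * sqrt 2 * a powr (5/2) / (15 * b\<^sup>2))) {0 .. sb}
        \<and> jact \<alpha> u v = 4 * sqrt 2 * a powr (5/2) / (15 * b\<^sup>2)
        \<and> jact \<alpha> u v = 4 * sqrt 2 / 15 * fstr (u\<^sup>2 + v\<^sup>2)"
    by (rule per_uv[OF assms])
next
  have j: "jact \<alpha> u v = 4 * sqrt 2 / 15 * fstr (u\<^sup>2 + v\<^sup>2)" for u v
    using per_uv[OF assms, of u v] by (simp add: Let_def)
  show "weakly_isodrastic (jact \<alpha>) hh"
    unfolding weakly_isodrastic_def hh_def j by (auto simp: add.assoc)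
next
  assume "\<alpha> \<noteq> 0"
  have m: "BB \<alpha> (2 * acoef \<alpha> u v / (3 * bcoef \<alpha> u v)) u v = 1 + u\<^sup>2 + v\<^sup>2 - 4 / 27 * qf \<alpha> u v" for u v
    using per_uv[OF assms, of u v] by (simp add: Let_def)
  show "\<exists>u v u' v'. hh u v = hh u' v' \<and>
           BB \<alpha> (2 * acoef \<alpha> u v / (3 * bcoef \<alpha> u v)) u v
             \<noteq> BB \<alpha> (2 * acoef \<alpha> u' v' / (3 * bcoef \<alpha> u' v')) u' v'"
    by (rule exI[of _ 1], rule exI[of _ 0], rule exI[of _ 0], rule exI[of _ 1])
      (simp add: m hh_def qf_def \<open>\<alpha> \<noteq> 0\<close>)
qed

end
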